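(* If the communication graph of an SCS is a tree, then the system has a single ring.
   Context: Let $T=\{C_1,\dots,C_n\}$ be pairwise disjoint unit circles in the plane (trajectories) and $\epsilon<0.5$ a communication range. The graph of potential links $G_\epsilon(T)$ has the circle centers as nodes and an edge $\{i,j\}$ whenever the centers of $C_i,C_j$ are at distance at most $2+\epsilon$; it is assumed connected. Points of a circle are identified with angles (modulo $2\pi$), and a robot traverses a circle in one time unit. A schedule is a pair $(f,g)$, $f:T\to[0,2\pi)$, $g:T\to\{-1,1\}$ ($1$ = counterclockwise); the robot on $C_i$ is at angle $f(C_i)+2\pi g(C_i)t$ at time $t$. A communication graph $G=(V,E)$ is a connected spanning subgraph of $G_\epsilon(T)$. The link position $\phi_{ij}$ is the point of $C_i$ closest to $C_j$. A schedule is $G$-synchronized if for every $\{i,j\}\in E$ the robot on $C_i$ is at $\phi_{ij}$ exactly when the robot on $C_j$ is at $\phi_{ji}$. An SCS with communication graph $G$ consists of $n$ robots, one per circle, moving under a $G$-synchronized schedule with $g(C_i)=-g(C_j)$ for all $\{i,j\}\in E$. A ring of the SCS is the closed path (locus of points) visited by a robot that follows the assigned movement direction on each circle and always shifts to the neighboring circle (in $G$) at every link position it reaches; every arc of a circle between consecutive link positions lies on exactly one ring. *)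

theory Defs
  imports "HOL-Analysis.Analysis"
begin

text \<open>Circles are indexed by a finite vertex set V; circle C_i is the unit circle
  (sphere (c i) 1) in the complex plane with center c i.\<close>

definition unit_circle :: "complex \<Rightarrow> complex set" where
  "unit_circle z = sphere z 1"

definition adj :: "'a set set \<Rightarrow> ('a \<times> 'a) set" where
  "adj E = {(a, b). {a, b} \<in> E}"

definition simple_graph :: "'a set \<Rightarrow> 'a set set \<Rightarrow> bool" where
  "simple_graph V E \<longleftrightarrow> E \<subseteq> {{i, j} | i j. i \<in> V \<and> j \<in> V \<and> i \<noteq> j}"

definition graph_connected :: "'a set \<Rightarrow> 'a set set \<Rightarrow> bool" where
  "graph_connected V E \<longleftrightarrow> (\<forall>i\<in>V. \<forall>j\<in>V. (i, j) \<in> (adj E)\<^sup>*)"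

definition acyclic_graph :: "'a set \<Rightarrow> 'a set set \<Rightarrow> bool" where
  "acyclic_graph V E \<longleftrightarrow>
     \<not> (\<exists>vs. length vs \<ge> 3 \<and> distinct vs \<and> set vs \<subseteq> V \<and>
            (\<forall>k < length vs. {vs ! k, vs ! ((k + 1) mod length vs)} \<in> E))"

definition is_tree :: "'a set \<Rightarrow> 'a set set \<Rightarrow> bool" where
  "is_tree V E \<longleftrightarrow> simple_graph V E \<and> graph_connected V E \<and> acyclic_graph V E"

definition potential_links :: "'a set \<Rightarrow> ('a \<Rightarrow> complex) \<Rightarrow> real \<Rightarrow> 'a set set" where
  "potential_links V c eps =
     {{i, j} | i j. i \<in> V \<and> j \<in> V \<and> i \<noteq> j \<and> dist (c i) (c j) \<le> 2 + eps}"

definition comm_graph :: "'a set \<Rightarrow> ('a \<Rightarrow> complex) \<Rightarrow> real \<Rightarrow> 'a set set \<Rightarrow> bool" where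
  "comm_graph V c eps E \<longleftrightarrow> E \<subseteq> potential_links V c eps \<and> graph_connected V E"

text \<open>Link position phi_ij: the point of C_i closest to C_j.\<close>
definition link_pos :: "('a \<Rightarrow> complex) \<Rightarrow> 'a \<Rightarrow> 'a \<Rightarrow> complex" where
  "link_pos c i j = c i + (c j - c i) / complex_of_real (cmod (c j - c i))"

definition robot_pos :: "('a \<Rightarrow> complex) \<Rightarrow> ('a \<Rightarrow> real) \<Rightarrow> ('a \<Rightarrow> int) \<Rightarrow> 'a \<Rightarrow> real \<Rightarrow> complex" where
  "robot_pos c f g i t = c i + cis (f i + 2 * pi * of_int (g i) * t)"

definition schedule :: "'a set \<Rightarrow> ('a \<Rightarrow> real) \<Rightarrow> ('a \<Rightarrow> int) \<Rightarrow> bool" where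
  "schedule V f g \<longleftrightarrow> (\<forall>i\<in>V. 0 \<le> f i \<and> f i < 2 * pi \<and> g i \<in> {-1, 1})"

definition synchronized ::
  "('a \<Rightarrow> complex) \<Rightarrow> 'a set set \<Rightarrow> ('a \<Rightarrow> real) \<Rightarrow> ('a \<Rightarrow> int) \<Rightarrow> bool" where
  "synchronized c E f g \<longleftrightarrow>
     (\<forall>i j. {i, j} \<in> E \<longrightarrow> (\<forall>t::real. t \<ge> 0 \<longrightarrow>
        (robot_pos c f g i t = link_pos c i j \<longleftrightarrow> robot_pos c f g j t = link_pos c j i)))"

definition SCS ::
  "'a set \<Rightarrow> ('a \<Rightarrow> complex) \<Rightarrow> real \<Rightarrow> 'a set set \<Rightarrow> ('a \<Rightarrow> real) \<Rightarrow> ('a \<Rightarrow> int) \<Rightarrow> bool" where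
  "SCS V c eps E f g \<longleftrightarrow> comm_graph V c eps E \<and> schedule V f g \<and> synchronized c E f g \<and>
     (\<forall>i j. {i, j} \<in> E \<longrightarrow> g i = - g j)"

definition arc_reach ::
  "('a \<Rightarrow> complex) \<Rightarrow> ('a \<Rightarrow> int) \<Rightarrow> 'a \<Rightarrow> complex \<Rightarrow> complex \<Rightarrow> real \<Rightarrow> bool" where
  "arc_reach c g i p q s \<longleftrightarrow> 0 < s \<and> s \<le> 2 * pi \<and>
     q = c i + (p - c i) * cis (of_int (g i) * s)"

text \<open>Darts (i,j), {i,j} in E: the arc of C_i starting at link position phi_ij, traversed
  in direction g i.  Ring step: from dart (i,j) the robot travels on C_i until the first
  link position phi_ik it reaches, then shifts to C_k at phi_ki, i.e. dart (k,i).\<close>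
definition darts :: "'a set set \<Rightarrow> ('a \<times> 'a) set" where
  "darts E = {(i, j). {i, j} \<in> E}"

definition ring_step ::
  "('a \<Rightarrow> complex) \<Rightarrow> 'a set set \<Rightarrow> ('a \<Rightarrow> int) \<Rightarrow> (('a \<times> 'a) \<times> ('a \<times> 'a)) set" where
  "ring_step c E g = {((i, j), (k, i)) | i j k. {i, j} \<in> E \<and> {i, k} \<in> E \<and>
     (\<exists>s. arc_reach c g i (link_pos c i j) (link_pos c i k) s \<and>
        (\<forall>k' s'. {i, k'} \<in> E \<longrightarrow> arc_reach c g i (link_pos c i j) (link_pos c i k') s' \<longrightarrow> s \<le> s'))}"

text \<open>The rings are the orbits of ring_step on the darts (each arc between consecutive
  link positions lies on exactly one ring).  The system has a single ring iff all arcs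
  lie on the same ring.\<close>
definition single_ring :: "('a \<Rightarrow> complex) \<Rightarrow> 'a set set \<Rightarrow> ('a \<Rightarrow> int) \<Rightarrow> bool" where
  "single_ring c E g \<longleftrightarrow> (\<forall>d\<in>darts E. \<forall>d'\<in>darts E. (d, d') \<in> (ring_step c E g)\<^sup>*)"

end

theory Submission
  imports Defs
begin


definition Dd :: "complex \<Rightarrow> complex \<Rightarrow> real" where
  "Dd x y = (if Arg2pi (y / x) = 0 then 2 * pi else Arg2pi (y / x))"

lemma Dd_range: "0 < Dd x y \<and> Dd x y \<le> 2 * pi"
  using Arg2pi[of "y/x"] unfolding Dd_def by (auto simp: pi_gt_zero)

lemma Dd_eq:
  assumes "cmod x = 1" "cmod y = 1"
  shows "y = x * cis (Dd x y)"
proof -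
  have x0: "x \<noteq> 0" using assms by auto
  have "cmod (y / x) = 1" using assms by (simp add: norm_divide)
  then have "exp (\<i> * of_real (Arg2pi (y/x))) = y / x" using complex_norm_eq_1_exp by blast
  then have e: "cis (Arg2pi (y/x)) = y / x" by (simp add: cis_conv_exp mult.commute)
  have "cis (Dd x y) = y / x"
    using e unfolding Dd_def by (cases "Arg2pi (y/x) = 0") (auto simp: )
  then show ?thesis using x0 by simp
qed

lemma Dd_unique:
  assumes "x \<noteq> 0" "y = x * cis s" "0 < s" "s \<le> 2 * pi"
  shows "s = Dd x y"
proof -
  have yx: "y / x = cis s" using assms by simp
  show ?thesis
  proof (cases "s = 2 * pi")
    case True
    then show ?thesis using yx Arg2pi_of_real[of 1] unfolding Dd_def by simp
  next
    case False
    then have "s < 2 * pi" using assms by simp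
    then have "Arg2pi (cis s) = s"
      by (intro Arg2pi_unique[of 1]) (use assms in \<open>auto simp: cis_conv_exp mult.commute\<close>)
    then show ?thesis using yx assms unfolding Dd_def by simp
  qed
qed

definition nxt :: "'b set \<Rightarrow> ('b \<Rightarrow> complex) \<Rightarrow> 'b \<Rightarrow> 'b" where
  "nxt N w a = (SOME k. k \<in> N \<and> (\<forall>k'\<in>N. Dd (w a) (w k) \<le> Dd (w a) (w k')))"

lemma ex_minimizer:
  fixes f :: "'b \<Rightarrow> real"
  assumes "finite N" "N \<noteq> {}"
  shows "\<exists>k\<in>N. \<forall>k'\<in>N. f k \<le> f k'"
proof -
  have "Min (f ` N) \<in> f ` N" using assms by simp
  then obtain k where "k \<in> N" "f k = Min (f ` N)" by auto
  moreover have "\<forall>k'\<in>N. Min (f ` N) \<le> f k'" using assms by auto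
  ultimately show ?thesis by metis
qed

lemma nxt_prop:
  assumes "finite N" "a \<in> N"
  shows "nxt N w a \<in> N \<and> (\<forall>k'\<in>N. Dd (w a) (w (nxt N w a)) \<le> Dd (w a) (w k'))"
proof -
  have "\<exists>k\<in>N. \<forall>k'\<in>N. Dd (w a) (w k) \<le> Dd (w a) (w k')"
    using ex_minimizer[of N "\<lambda>k. Dd (w a) (w k)"] assms by auto
  then have "\<exists>k. k \<in> N \<and> (\<forall>k'\<in>N. Dd (w a) (w k) \<le> Dd (w a) (w k'))" by blast
  from someI_ex[OF this] show ?thesis unfolding nxt_def .
qed

lemma nxt_pow_in:
  assumes "finite N" "a \<in> N"
  shows "(nxt N w ^^ m) a \<in> N"
proof (induction m)
  case (Suc m)
  then show ?case using nxt_prop[OF assms(1) Suc] by simp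
qed (use assms in simp)

lemma nxt_cyc:
  assumes fin: "finite N" and w1: "\<forall>k\<in>N. cmod (w k) = 1" and inj: "inj_on w N"
    and a: "a \<in> N" and b: "b \<in> N"
  shows "\<exists>m. (nxt N w ^^ m) a = b"
proof (rule ccontr)
  assume nb: "\<not> (\<exists>m. (nxt N w ^^ m) a = b)"
  define Orb where "Orb = range (\<lambda>m. (nxt N w ^^ m) a)"
  have OrbsN: "Orb \<subseteq> N" unfolding Orb_def using nxt_pow_in[OF fin a] by auto
  have finOrb: "finite Orb" using OrbsN fin finite_subset by blast
  have "Orb \<noteq> {}" unfolding Orb_def by auto
  then obtain p where oOrb: "p \<in> Orb" and omin: "\<forall>p'\<in>Orb. Dd (w p) (w b) \<le> Dd (w p') (w b)"
    using ex_minimizer[OF finOrb, of "\<lambda>p. Dd (w p) (w b)"] by auto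
  from oOrb obtain m where om: "p = (nxt N w ^^ m) a" unfolding Orb_def by auto
  define n where "n = nxt N w p"
  have nOrb: "n \<in> Orb" unfolding Orb_def n_def om by (auto intro: range_eqI[of _ _ "Suc m"])
  have nneq: "n \<noteq> b" using nOrb nb unfolding Orb_def by auto
  have oN: "p \<in> N" and nN: "n \<in> N" using oOrb nOrb OrbsN by auto
  have le: "Dd (w p) (w n) \<le> Dd (w p) (w b)" using nxt_prop[OF fin oN, of w] b unfolding n_def by auto
  have eqn: "w n = w p * cis (Dd (w p) (w n))" using Dd_eq w1 oN nN by auto
  have eqb: "w b = w p * cis (Dd (w p) (w b))" using Dd_eq w1 oN b by auto
  have "Dd (w p) (w n) \<noteq> Dd (w p) (w b)"
  proof
    assume "Dd (w p) (w n) = Dd (w p) (w b)"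
    then have "w n = w b" using eqn eqb by simp
    then show False using inj nN b nneq by (auto dest: inj_onD)
  qed
  then have lt: "Dd (w p) (w n) < Dd (w p) (w b)" using le by simp
  have "w b = w n * cis (Dd (w p) (w b) - Dd (w p) (w n))"
  proof -
    have "w b * cis (Dd (w p) (w n)) = w p * cis (Dd (w p) (w b)) * cis (Dd (w p) (w n))"
      using eqb by simp
    also have "\<dots> = (w p * cis (Dd (w p) (w n))) * cis (Dd (w p) (w b))" by (simp add: ac_simps)
    also have "\<dots> = w n * cis (Dd (w p) (w b))" using eqn by simp
    finally show ?thesis by (simp add: cis_divide[symmetric] field_simps)
  qed
  moreover have "w n \<noteq> 0" using w1 nN by auto
  ultimately have "Dd (w p) (w b) - Dd (w p) (w n) = Dd (w n) (w b)"
    using lt Dd_range[of "w p" "w b"] Dd_range[of "w p" "w n"] by (intro Dd_unique) auto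
  moreover have "Dd (w p) (w b) \<le> Dd (w n) (w b)" using omin nOrb by auto
  ultimately show False using Dd_range[of "w p" "w n"] by simp
qed




lemma funpow_cancel:
  assumes "inj_on s D" "s ` D \<subseteq> D" "x \<in> D" "y \<in> D" "(s ^^ a) x = (s ^^ a) y"
  shows "x = y"
  using assms(3-5)
proof (induction a arbitrary: x y)
  case (Suc a)
  have "(s ^^ a) (s x) = (s ^^ a) (s y)" using Suc.prems by (simp add: funpow_swap1)
  then have "s x = s y" using Suc.IH Suc.prems assms(2) by blast
  then show ?case using assms(1) Suc.prems by (auto dest: inj_onD)
qed simp

lemma funpow_in: "s ` D \<subseteq> D \<Longrightarrow> e \<in> D \<Longrightarrow> (s ^^ n) e \<in> D"
  by (induction n) auto

lemma perm_cycle: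
  assumes fin: "finite D" and sD: "s ` D \<subseteq> D" and inj: "inj_on s D" and e: "e \<in> D"
  shows "\<exists>n>0. (s ^^ n) e = e"
proof -
  let ?f = "\<lambda>t. (s ^^ t) e"
  have "\<not> inj_on ?f {0..card D}"
  proof
    assume "inj_on ?f {0..card D}"
    moreover have "?f ` {0..card D} \<subseteq> D" using funpow_in[OF sD e] by auto
    ultimately have "card {0..card D} \<le> card D" using fin by (rule card_inj_on_le)
    then show False by simp
  qed
  then obtain a b where ab: "a \<noteq> b" "?f a = ?f b" unfolding inj_on_def by auto
  have "\<exists>a b. a < b \<and> ?f a = ?f b"
    using ab by (metis linorder_neqE_nat)
  then obtain a b where ab: "a < b" "?f a = ?f b" by blast
  have "(s ^^ a) ((s ^^ (b - a)) e) = (s ^^ a) e"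
    using ab by (metis funpow_add comp_apply le_add_diff_inverse less_imp_le)
  then have "(s ^^ (b - a)) e = e"
    using funpow_cancel[OF inj sD funpow_in[OF sD e] e] by blast
  then show ?thesis using ab by (intro exI[of _ "b - a"]) auto
qed

lemma rtrancl_path:
  assumes "(x, y) \<in> (adj F)\<^sup>*"
  shows "\<exists>xs. xs \<noteq> [] \<and> hd xs = x \<and> last xs = y \<and> distinct xs \<and>
     successively (\<lambda>a b. {a, b} \<in> F) xs"
  using assms
proof (induction rule: rtrancl_induct)
  case base
  then show ?case by (intro exI[of _ "[x]"]) auto
next
  case (step y z)
  then obtain xs where xs: "xs \<noteq> []" "hd xs = x" "last xs = y" "distinct xs"
    "successively (\<lambda>a b. {a, b} \<in> F) xs" by blast
  have yz: "{y, z} \<in> F" using step.hyps(2) unfolding adj_def by auto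
  show ?case
  proof (cases "z \<in> set xs")
    case True
    then obtain as bs where xsd: "xs = as @ z # bs" by (meson split_list)
    have "successively (\<lambda>a b. {a, b} \<in> F) (as @ [z])"
      using xs(5) unfolding xsd by (auto simp: successively_append_iff successively_Cons)
    moreover have "hd (as @ [z]) = x" using xs(2) unfolding xsd by (cases as) auto
    moreover have "distinct (as @ [z])" using xs(4) unfolding xsd by auto
    ultimately show ?thesis by (intro exI[of _ "as @ [z]"]) auto
  next
    case False
    have "successively (\<lambda>a b. {a, b} \<in> F) (xs @ [z])"
      using xs yz by (auto simp: successively_append_iff)
    then show ?thesis using xs False by (intro exI[of _ "xs @ [z]"]) auto
  qed
qed

lemma tree_cut:
  assumes tree: "is_tree V E" and ij: "{i, j} \<in> E"
  shows "(j, i) \<notin> (adj (E - {{i, j}}))\<^sup>*"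
proof
  assume "(j, i) \<in> (adj (E - {{i, j}}))\<^sup>*"
  then have "\<exists>xs. xs \<noteq> [] \<and> hd xs = j \<and> last xs = i \<and> distinct xs \<and>
     successively (\<lambda>a b. {a, b} \<in> E - {{i, j}}) xs" by (rule rtrancl_path)
  then obtain xs where xs: "xs \<noteq> []" "hd xs = j" "last xs = i" "distinct xs"
    "successively (\<lambda>a b. {a, b} \<in> E - {{i, j}}) xs" by blast
  have sg: "simple_graph V E" and ac: "acyclic_graph V E" using tree unfolding is_tree_def by auto
  have inE: "\<And>e. e \<in> E \<Longrightarrow> \<exists>a b. e = {a, b} \<and> a \<in> V \<and> b \<in> V \<and> a \<noteq> b"
    using sg unfolding simple_graph_def by blast
  obtain a b where ab: "{i, j} = {a, b}" "a \<in> V" "b \<in> V" "a \<noteq> b" using inE[OF ij] by blast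
  have ijV: "i \<in> V" "j \<in> V" "i \<noteq> j" using ab by (auto simp: doubleton_eq_iff)
  have len2: "length xs \<ge> 2"
  proof (rule ccontr)
    assume "\<not> length xs \<ge> 2"
    moreover have "length xs \<noteq> 0" using xs(1) by simp
    ultimately have "length xs = 1" by linarith
    then obtain x where "xs = [x]" by (cases xs) auto
    then show False using xs ijV by auto
  qed
  have len3: "length xs \<ge> 3"
  proof (rule ccontr)
    assume "\<not> length xs \<ge> 3"
    then have "length xs = 2" using len2 by simp
    then obtain x y where "xs = [x, y]" 
      by (cases xs; cases "tl xs") auto
    then show False using xs by (auto simp: insert_commute)
  qed
  have step: "\<And>k. Suc k < length xs \<Longrightarrow> {xs ! k, xs ! Suc k} \<in> E"
    using successively_nth[OF xs(5)] by auto
  have setV: "set xs \<subseteq> V"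
  proof
    fix x assume "x \<in> set xs"
    then obtain k where k: "k < length xs" "xs ! k = x" by (auto simp: in_set_conv_nth)
    show "x \<in> V"
    proof (cases "Suc k < length xs")
      case True
      then show ?thesis using inE[OF step[OF True]] k by (auto simp: doubleton_eq_iff)
    next
      case False
      then have "k = length xs - 1" using k by simp
      then have "x = i" using k xs(1,3) by (simp add: last_conv_nth)
      then show ?thesis using ijV by simp
    qed
  qed
  have cyc: "\<forall>k < length xs. {xs ! k, xs ! ((k + 1) mod length xs)} \<in> E"
  proof (intro allI impI)
    fix k assume k: "k < length xs"
    show "{xs ! k, xs ! ((k + 1) mod length xs)} \<in> E"
    proof (cases "Suc k < length xs")
      case True
      then show ?thesis using step by simp
    next
      case False
      then have kk: "k = length xs - 1" using k by simp
      then have "k + 1 = length xs" using k by simp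
      then have "(k + 1) mod length xs = 0" by simp
      moreover have "xs ! k = i" using kk xs(1,3) by (simp add: last_conv_nth)
      moreover have "xs ! 0 = j" using xs(1,2) by (simp add: hd_conv_nth)
      ultimately show ?thesis using ij by simp
    qed
  qed
  have "\<exists>vs. length vs \<ge> 3 \<and> distinct vs \<and> set vs \<subseteq> V \<and>
            (\<forall>k < length vs. {vs ! k, vs ! ((k + 1) mod length vs)} \<in> E)"
    using len3 xs(4) setV cyc by blast
  then show False using ac unfolding acyclic_graph_def by blast
qed




lemma circ_inter:
  assumes "cmod (b - a) \<le> 2"
  shows "unit_circle a \<inter> unit_circle b \<noteq> {}"
proof (cases "a = b")
  case True
  then have "a + 1 \<in> unit_circle a \<inter> unit_circle b" unfolding unit_circle_def by (simp add: dist_norm)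
  then show ?thesis by blast
next
  case False
  define d where "d = cmod (b - a)"
  have d0: "d > 0" using False unfolding d_def by simp
  have d2: "d \<le> 2" using assms unfolding d_def by simp
  define t where "t = sqrt (1 / d\<^sup>2 - 1/4)"
  have tpos: "1 / d\<^sup>2 - 1/4 \<ge> 0"
  proof -
    have "d * d \<le> 2 * 2" using d2 d0 by (intro mult_mono) auto
    then have "d\<^sup>2 \<le> 4" by (simp add: power2_eq_square)
    then have "1 / d\<^sup>2 \<ge> 1/4" using d0 by (simp add: field_simps)
    then show ?thesis by simp
  qed
  have t2: "t\<^sup>2 = 1 / d\<^sup>2 - 1/4" unfolding t_def using tpos by simp
  have n1: "cmod (Complex (1/2) t) = 1 / d"
    unfolding cmod_def using t2 d0 by (simp add: real_sqrt_divide power2_eq_square)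
  have n2: "cmod (Complex (-1/2) t) = 1 / d"
    unfolding cmod_def using t2 d0 by (simp add: real_sqrt_divide power2_eq_square)
  define p where "p = a + (b - a) * Complex (1/2) t"
  have "dist a p = 1" unfolding p_def dist_norm using n1 d0 by (simp add: norm_mult d_def)
  moreover have "p - b = (b - a) * Complex (-1/2) t" unfolding p_def
    by (simp add: complex_eq_iff algebra_simps)
  then have "cmod (p - b) = 1" using n2 d0 by (simp add: norm_mult d_def)
  then have "dist b p = 1" by (simp add: dist_norm norm_minus_commute)
  ultimately have "p \<in> unit_circle a \<inter> unit_circle b" unfolding unit_circle_def by simp
  then show ?thesis by blast
qed




definition uu :: "('a \<Rightarrow> complex) \<Rightarrow> 'a \<Rightarrow> 'a \<Rightarrow> complex" where
  "uu c i k = link_pos c i k - c i"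

definition ww :: "('a \<Rightarrow> complex) \<Rightarrow> ('a \<Rightarrow> int) \<Rightarrow> 'a \<Rightarrow> 'a \<Rightarrow> complex" where
  "ww c g i k = (if g i = 1 then uu c i k else cnj (uu c i k))"

definition Nb :: "'a set set \<Rightarrow> 'a \<Rightarrow> 'a set" where
  "Nb E i = {k. {i, k} \<in> E}"

definition sg :: "('a \<Rightarrow> complex) \<Rightarrow> 'a set set \<Rightarrow> ('a \<Rightarrow> int) \<Rightarrow> 'a \<times> 'a \<Rightarrow> 'a \<times> 'a" where
  "sg c E g d = (nxt (Nb E (fst d)) (ww c g (fst d)) (snd d), fst d)"

lemma arc_iff:
  assumes "g i \<in> {-1, 1}"
  shows "arc_reach c g i (link_pos c i j) (link_pos c i k) s \<longleftrightarrow>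
    0 < s \<and> s \<le> 2 * pi \<and> ww c g i k = ww c g i j * cis s"
proof -
  have "(link_pos c i k = c i + (link_pos c i j - c i) * cis (of_int (g i) * s)) \<longleftrightarrow>
        uu c i k = uu c i j * cis (of_int (g i) * s)"
    unfolding uu_def by (auto simp: algebra_simps)
  moreover have "uu c i k = uu c i j * cis (of_int (g i) * s) \<longleftrightarrow> ww c g i k = ww c g i j * cis s"
  proof (cases "g i = 1")
    case True
    then show ?thesis unfolding ww_def by simp
  next
    case False
    then have g: "g i = -1" using assms by auto
    have "uu c i k = uu c i j * cis (- s) \<longleftrightarrow> cnj (uu c i k) = cnj (uu c i j * cis (- s))"
      using complex_cnj_cancel_iff by metis
    also have "\<dots> \<longleftrightarrow> cnj (uu c i k) = cnj (uu c i j) * cis s" by (simp add: cis_cnj)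
    finally show ?thesis unfolding ww_def using g by simp
  qed
  ultimately show ?thesis unfolding arc_reach_def by simp
qed

locale setting =
  fixes V :: "'a set" and c :: "'a \<Rightarrow> complex" and eps :: real
    and E :: "'a set set" and f :: "'a \<Rightarrow> real" and g :: "'a \<Rightarrow> int"
  assumes finV: "finite V"
    and disj: "\<forall>i\<in>V. \<forall>j\<in>V. i \<noteq> j \<longrightarrow> unit_circle (c i) \<inter> unit_circle (c j) = {}"
    and eps: "eps < 0.5"
    and scs: "SCS V c eps E f g"
    and tree: "is_tree V E"
begin

lemma edge:
  assumes "{i, j} \<in> E"
  shows "i \<in> V \<and> j \<in> V \<and> i \<noteq> j \<and> 2 < cmod (c j - c i) \<and> cmod (c j - c i) < 5/2"
proof -
  have "simple_graph V E" using tree unfolding is_tree_def by simp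
  then obtain a b where ab: "{i, j} = {a, b}" "a \<in> V" "b \<in> V" "a \<noteq> b"
    using assms unfolding simple_graph_def by blast
  then have V: "i \<in> V" "j \<in> V" "i \<noteq> j" by (auto simp: doubleton_eq_iff)
  have "E \<subseteq> potential_links V c eps" using scs unfolding SCS_def comm_graph_def by simp
  then obtain a' b' where ab': "{i, j} = {a', b'}" "dist (c a') (c b') \<le> 2 + eps"
    using assms unfolding potential_links_def by blast
  then have "dist (c i) (c j) \<le> 2 + eps" by (auto simp: doubleton_eq_iff dist_commute)
  then have up: "cmod (c j - c i) < 5/2" using eps by (simp add: dist_norm norm_minus_commute)
  have lo: "2 < cmod (c j - c i)"
  proof (rule ccontr)
    assume "\<not> 2 < cmod (c j - c i)"
    then have "unit_circle (c i) \<inter> unit_circle (c j) \<noteq> {}" by (intro circ_inter) simp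
    then show False using disj V by auto
  qed
  show ?thesis using V up lo by simp
qed

lemma uu_eq:
  assumes "{i, k} \<in> E"
  shows "c k - c i = of_real (cmod (c k - c i)) * uu c i k" and "cmod (uu c i k) = 1"
proof -
  have "2 < cmod (c k - c i)" using edge[OF assms] by simp
  then have ne: "cmod (c k - c i) \<noteq> 0" by linarith
  show "c k - c i = of_real (cmod (c k - c i)) * uu c i k"
    using ne unfolding uu_def link_pos_def by simp
  show "cmod (uu c i k) = 1"
    using ne unfolding uu_def link_pos_def by (simp add: norm_divide)
qed

lemma ww_unit: "{i, k} \<in> E \<Longrightarrow> cmod (ww c g i k) = 1"
  using uu_eq(2) unfolding ww_def by simp

lemma uu_inj: "inj_on (uu c i) (Nb E i)"
proof
  fix j k assume j: "j \<in> Nb E i" and k: "k \<in> Nb E i" and eq: "uu c i j = uu c i k"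
  show "j = k"
  proof (rule ccontr)
    assume jk: "j \<noteq> k"
    have ej: "{i, j} \<in> E" and ek: "{i, k} \<in> E" using j k unfolding Nb_def by auto
    define rj where "rj = cmod (c j - c i)"
    define rk where "rk = cmod (c k - c i)"
    have e1: "c j - c i = of_real rj * uu c i j" using uu_eq(1)[OF ej] rj_def by simp
    have e2: "c k - c i = of_real rk * uu c i j" using uu_eq(1)[OF ek] eq rk_def by simp
    have "c j - c k = (c j - c i) - (c k - c i)" by simp
    also have "\<dots> = of_real rj * uu c i j - of_real rk * uu c i j" by (simp only: e1 e2)
    also have "\<dots> = of_real (rj - rk) * uu c i j" by (simp add: algebra_simps)
    finally have "cmod (c j - c k) = \<bar>rj - rk\<bar>" using uu_eq(2)[OF ej] by (simp add: norm_mult of_real_diff[symmetric] del: of_real_diff)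
    also have "\<dots> \<le> 2" using edge[OF ej] edge[OF ek] unfolding rj_def rk_def by (simp add: abs_le_iff)
    finally have "unit_circle (c k) \<inter> unit_circle (c j) \<noteq> {}" by (intro circ_inter)
    then show False using disj edge[OF ej] edge[OF ek] jk by auto
  qed
qed

lemma ww_inj: "inj_on (ww c g i) (Nb E i)"
proof (cases "g i = 1")
  case True
  then show ?thesis using uu_inj unfolding ww_def by simp
next
  case False
  then have "ww c g i = (\<lambda>k. cnj (uu c i k))" unfolding ww_def by auto
  then show ?thesis using uu_inj unfolding inj_on_def by auto
qed

lemma Nb_fin: "finite (Nb E i)"
proof -
  have "Nb E i \<subseteq> V" unfolding Nb_def using edge by auto
  then show ?thesis using finV finite_subset by blast
qed

lemma g_pm: "{i, j} \<in> E \<Longrightarrow> g i \<in> {-1, 1}"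
  using edge[of i j] scs unfolding SCS_def schedule_def by auto

lemma step_in:
  assumes ij: "{i, j} \<in> E"
  shows "((i, j), sg c E g (i, j)) \<in> ring_step c E g"
proof -
  define N where "N = Nb E i"
  define w where "w = ww c g i"
  define k where "k = nxt N w j"
  have jN: "j \<in> N" using ij unfolding N_def Nb_def by simp
  have kN: "k \<in> N" and kmin: "\<forall>k'\<in>N. Dd (w j) (w k) \<le> Dd (w j) (w k')"
    using nxt_prop[OF Nb_fin jN[unfolded N_def], of w] unfolding k_def N_def by auto
  have ik: "{i, k} \<in> E" using kN unfolding N_def Nb_def by simp
  have gi: "g i \<in> {-1, 1}" using g_pm[OF ij] .
  define s where "s = Dd (w j) (w k)"
  have wj: "cmod (w j) = 1" and wk: "cmod (w k) = 1" using ww_unit ij ik unfolding w_def by auto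
  have arc: "arc_reach c g i (link_pos c i j) (link_pos c i k) s"
    unfolding arc_iff[of g i c, OF gi] using Dd_range Dd_eq[OF wj wk] unfolding s_def w_def by auto
  have mn: "\<forall>k' s'. {i, k'} \<in> E \<longrightarrow> arc_reach c g i (link_pos c i j) (link_pos c i k') s' \<longrightarrow> s \<le> s'"
  proof (intro allI impI)
    fix k' s' assume ik': "{i, k'} \<in> E" and a': "arc_reach c g i (link_pos c i j) (link_pos c i k') s'"
    then have "0 < s'" "s' \<le> 2 * pi" "w k' = w j * cis s'" unfolding arc_iff[of g i c, OF gi] w_def by auto
    moreover have "w j \<noteq> 0" using wj by auto
    ultimately have "s' = Dd (w j) (w k')" by (intro Dd_unique) auto
    moreover have "k' \<in> N" using ik' unfolding N_def Nb_def by simp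
    ultimately show "s \<le> s'" using kmin unfolding s_def by auto
  qed
  have "sg c E g (i, j) = (k, i)" unfolding sg_def k_def N_def w_def by simp
  then show ?thesis unfolding ring_step_def using ij ik arc mn by blast
qed

end




context setting begin

lemma darts_fin: "finite (darts E)"
proof -
  have "darts E \<subseteq> V \<times> V" unfolding darts_def using edge by auto
  then show ?thesis using finV finite_subset by blast
qed

lemma sg_D: "d \<in> darts E \<Longrightarrow> sg c E g d \<in> darts E"
proof -
  assume d: "d \<in> darts E"
  obtain i j where dij: "d = (i, j)" by (cases d)
  have ij: "{i, j} \<in> E" using d dij unfolding darts_def by simp
  have "j \<in> Nb E i" using ij unfolding Nb_def by simp
  then have "nxt (Nb E i) (ww c g i) j \<in> Nb E i" using nxt_prop[OF Nb_fin] by blast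
  then show ?thesis unfolding dij sg_def darts_def Nb_def by (simp add: insert_commute)
qed

lemma nxt_inj: "inj_on (nxt (Nb E i) (ww c g i)) (Nb E i)"
proof (rule finite_surj_inj[OF Nb_fin])
  show "Nb E i \<subseteq> nxt (Nb E i) (ww c g i) ` Nb E i"
  proof
    fix b assume b: "b \<in> Nb E i"
    let ?n = "nxt (Nb E i) (ww c g i)"
    have nb: "?n b \<in> Nb E i" using nxt_prop[OF Nb_fin b] by blast
    have u: "\<forall>k\<in>Nb E i. cmod (ww c g i k) = 1" using ww_unit unfolding Nb_def by auto
    obtain m where m: "(?n ^^ m) (?n b) = b" using nxt_cyc[OF Nb_fin u ww_inj nb b] by blast
    then have "?n ((?n ^^ m) b) = b" by (simp add: funpow_swap1)
    moreover have "(?n ^^ m) b \<in> Nb E i" using nxt_pow_in[OF Nb_fin b] by blast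
    ultimately show "b \<in> ?n ` Nb E i" by (metis image_eqI)
  qed
qed

lemma sg_inj: "inj_on (sg c E g) (darts E)"
proof
  fix d e assume d: "d \<in> darts E" and e: "e \<in> darts E" and eq: "sg c E g d = sg c E g e"
  obtain i j where dij: "d = (i, j)" by (cases d)
  obtain i' j' where eij: "e = (i', j')" by (cases e)
  have ii: "i = i'" using eq unfolding dij eij sg_def by simp
  have jN: "j \<in> Nb E i" and jN': "j' \<in> Nb E i" using d e ii unfolding dij eij darts_def Nb_def by auto
  have "nxt (Nb E i) (ww c g i) j = nxt (Nb E i) (ww c g i) j'" using eq ii unfolding dij eij sg_def by simp
  then have "j = j'" using nxt_inj jN jN' by (auto dest: inj_onD)
  then show "d = e" using ii dij eij by simp
qed

lemma sg_img: "sg c E g ` darts E \<subseteq> darts E" using sg_D by blast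

lemma C1: "d \<in> darts E \<Longrightarrow> (d, (sg c E g ^^ n) d) \<in> (ring_step c E g)\<^sup>*"
proof (induction n)
  case (Suc n)
  have "(sg c E g ^^ n) d \<in> darts E" using funpow_in[OF sg_img Suc.prems] .
  moreover obtain a b where ab: "(sg c E g ^^ n) d = (a, b)" by (cases "(sg c E g ^^ n) d")
  ultimately have "{a, b} \<in> E" unfolding darts_def by simp
  then have "((sg c E g ^^ n) d, sg c E g ((sg c E g ^^ n) d)) \<in> ring_step c E g"
    unfolding ab by (rule step_in)
  from rtrancl_into_rtrancl[OF Suc.IH[OF Suc.prems] this] show ?case by simp
qed simp

lemma C2: "d \<in> darts E \<Longrightarrow> (sg c E g d, d) \<in> (ring_step c E g)\<^sup>*"
proof -
  assume d: "d \<in> darts E"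
  obtain n where n: "n > 0" "(sg c E g ^^ n) d = d" using perm_cycle[OF darts_fin sg_img sg_inj d] by blast
  have "(sg c E g d, (sg c E g ^^ (n - 1)) (sg c E g d)) \<in> (ring_step c E g)\<^sup>*"
    using C1 sg_D[OF d] by blast
  moreover have "(sg c E g ^^ (n - 1)) (sg c E g d) = (sg c E g ^^ Suc (n - 1)) d"
    by (simp only: funpow_Suc_right comp_apply)
  then have "(sg c E g ^^ (n - 1)) (sg c E g d) = d" using n by simp
  ultimately show ?thesis by simp
qed

lemma step_shape: "((a, b), d') \<in> ring_step c E g \<Longrightarrow> \<exists>k. d' = (k, a) \<and> {a, k} \<in> E"
  unfolding ring_step_def by blast

lemma C3:
  assumes ij: "{i, j} \<in> E"
  shows "((j, i), (i, j)) \<in> (ring_step c E g)\<^sup>*"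
proof -
  define S where "S = {x. (j, x) \<in> (adj (E - {{i, j}}))\<^sup>*}"
  have iS: "i \<notin> S" using tree_cut[OF tree ij] unfolding S_def by simp
  have inv: "((j, i), d') \<in> (ring_step c E g)\<^sup>* \<Longrightarrow> fst d' \<in> S \<or> ((j, i), (i, j)) \<in> (ring_step c E g)\<^sup>*" for d'
  proof (induction rule: rtrancl_induct)
    case base
    then show ?case unfolding S_def by simp
  next
    case (step y z)
    show ?case
    proof (cases "((j, i), (i, j)) \<in> (ring_step c E g)\<^sup>*")
      case True
      then show ?thesis by simp
    next
      case False
      then have yS: "fst y \<in> S" using step.IH by simp
      obtain a b where yab: "y = (a, b)" by (cases y)
      obtain k where zk: "z = (k, a)" "{a, k} \<in> E" using step_shape step.hyps(2) yab by blast
      show ?thesis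
      proof (cases "{a, k} = {i, j}")
        case True
        have "a \<noteq> i" using yS iS yab by auto
        then have "a = j" "k = i" using True by (auto simp: doubleton_eq_iff)
        then have "z = (i, j)" using zk by simp
        then show ?thesis using step.hyps by (meson rtrancl_into_rtrancl)
      next
        case False
        then have "(a, k) \<in> adj (E - {{i, j}})" using zk unfolding adj_def by simp
        then have "k \<in> S" using yS yab unfolding S_def by (auto intro: rtrancl_into_rtrancl)
        then show ?thesis using zk by simp
      qed
    qed
  qed
  have ji: "(j, i) \<in> darts E" using ij unfolding darts_def by (simp add: insert_commute)
  obtain n where n: "n > 0" "(sg c E g ^^ n) (j, i) = (j, i)"
    using perm_cycle[OF darts_fin sg_img sg_inj ji] by blast
  define p where "p = (sg c E g ^^ (n - 1)) (j, i)"
  have "sg c E g p = (sg c E g ^^ Suc (n - 1)) (j, i)" unfolding p_def by simp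
  then have sp: "sg c E g p = (j, i)" using n by simp
  have "fst p = i" using sp unfolding sg_def by simp
  moreover have "((j, i), p) \<in> (ring_step c E g)\<^sup>*" using C1[OF ji] unfolding p_def .
  ultimately show ?thesis using inv iS by fastforce
qed

definition eqv where "eqv d e \<longleftrightarrow> (d, e) \<in> (ring_step c E g)\<^sup>* \<and> (e, d) \<in> (ring_step c E g)\<^sup>*"

lemma eqv_trans: "eqv a b \<Longrightarrow> eqv b d \<Longrightarrow> eqv a d"
  unfolding eqv_def by (meson rtrancl_trans)

lemma E2: "{i, j} \<in> E \<Longrightarrow> eqv (i, j) (j, i)"
  unfolding eqv_def using C3[of i j] C3[of j i] by (simp add: insert_commute)

lemma E3:
  assumes ij: "{i, j} \<in> E"
  shows "eqv (i, j) (i, nxt (Nb E i) (ww c g i) j)"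
proof -
  let ?k = "nxt (Nb E i) (ww c g i) j"
  have d: "(i, j) \<in> darts E" using ij unfolding darts_def by simp
  have "eqv (i, j) (?k, i)"
    using step_in[OF ij] C2[OF d] unfolding eqv_def sg_def by auto
  moreover have "(?k, i) \<in> darts E" using sg_D[OF d] unfolding sg_def by simp
  then have "eqv (?k, i) (i, ?k)" using E2 unfolding darts_def by simp
  ultimately show ?thesis using eqv_trans by blast
qed

lemma E4:
  assumes ij: "{i, j} \<in> E" and ik: "{i, k} \<in> E"
  shows "eqv (i, j) (i, k)"
proof -
  let ?n = "nxt (Nb E i) (ww c g i)"
  have jN: "j \<in> Nb E i" and kN: "k \<in> Nb E i" using ij ik unfolding Nb_def by auto
  have u: "\<forall>k\<in>Nb E i. cmod (ww c g i k) = 1" using ww_unit unfolding Nb_def by auto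
  obtain m where m: "(?n ^^ m) j = k" using nxt_cyc[OF Nb_fin u ww_inj jN kN] by blast
  have "eqv (i, j) (i, (?n ^^ m) j)"
  proof (induction m)
    case 0
    then show ?case unfolding eqv_def by simp
  next
    case (Suc m)
    have "(?n ^^ m) j \<in> Nb E i" using nxt_pow_in[OF Nb_fin jN] by blast
    then have "eqv (i, (?n ^^ m) j) (i, (?n ^^ Suc m) j)" using E3 unfolding Nb_def by simp
    then show ?case using Suc eqv_trans by blast
  qed
  then show ?thesis using m by simp
qed

lemma E5:
  assumes ij: "{i, j} \<in> E" and p: "(i, x) \<in> (adj E)\<^sup>*"
  shows "{x, y} \<in> E \<Longrightarrow> eqv (i, j) (x, y)"
  using p
proof (induction arbitrary: y rule: rtrancl_induct)
  case base
  then show ?case using E4 ij by blast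
next
  case (step x z)
  have xz: "{x, z} \<in> E" using step.hyps(2) unfolding adj_def by simp
  have "eqv (i, j) (x, z)" using step.IH xz by blast
  moreover have "eqv (x, z) (z, x)" using E2 xz by blast
  moreover have "eqv (z, x) (z, y)" using E4 xz step.prems by (simp add: insert_commute)
  ultimately show ?case using eqv_trans by blast
qed

lemma main: "single_ring c E g"
  unfolding single_ring_def
proof (intro ballI)
  fix d d' assume d: "d \<in> darts E" and d': "d' \<in> darts E"
  obtain i j where dij: "d = (i, j)" by (cases d)
  obtain x y where dxy: "d' = (x, y)" by (cases d')
  have ij: "{i, j} \<in> E" and xy: "{x, y} \<in> E" using d d' dij dxy unfolding darts_def by auto
  have "graph_connected V E" using tree unfolding is_tree_def by simp
  then have "(i, x) \<in> (adj E)\<^sup>*" using edge[OF ij] edge[OF xy] unfolding graph_connected_def by blast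
  then have "eqv (i, j) (x, y)" using E5 ij xy by blast
  then show "(d, d') \<in> (ring_step c E g)\<^sup>*" unfolding eqv_def dij dxy by simp
qed

end


theorem lemma7:
  fixes V :: "'a set" and c :: "'a \<Rightarrow> complex" and eps :: real
    and E :: "'a set set" and f :: "'a \<Rightarrow> real" and g :: "'a \<Rightarrow> int"
  assumes "finite V" and "V \<noteq> {}"
    and "\<forall>i\<in>V. \<forall>j\<in>V. i \<noteq> j \<longrightarrow> unit_circle (c i) \<inter> unit_circle (c j) = {}"
    and "eps < 0.5"
    and "graph_connected V (potential_links V c eps)"
    and "SCS V c eps E f g"
    and "is_tree V E"
  shows "single_ring c E g"
proof -
  interpret setting V c eps E f g
    by (rule setting.intro) (use assms in auto)
  show ?thesis by (rule main)
qed

end
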